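(* Let $(S,\mathcal{E})$ be a qualitative evidence frame. Define $i,u,d:2^{\mathcal{E}}\to\tau_{\mathcal{E}}$ by $i(\emptyset)=u(\emptyset)=d(\emptyset)=S$ and, for nonempty $\mathbf{E}\subseteq\mathcal{E}$: $i(\mathbf{E})=\bigcap\mathbf{E}$, $u(\mathbf{E})=\bigcup\mathbf{E}$, and $d(\mathbf{E})$ is the least (w.r.t. inclusion) element of $\tau_{\mathbf{E}}$ that is dense in $\bigcup\mathbf{E}$ w.r.t. $\tau_{\mathbf{E}}$ (such a least element exists). Then $\{i,u,d\}$ is a set of evidence allocation functions on $(S,\mathcal{E})$.
   Context: A qualitative evidence frame is a pair $(S,\mathcal{E})$ where $S$ is a finite nonempty set and $\mathcal{E}$ is a nonempty family of subsets of $S$ with $\emptyset\notin\mathcal{E}$ and $S\notin\mathcal{E}$. For any family $\mathbf{E}\subseteq 2^S$, $\tau_{\mathbf{E}}$ denotes the topology on $S$ generated by $\mathbf{E}$ (as a subbasis): it consists of $\emptyset$, $S$, all finite intersections of members of $\mathbf{E}$, and all arbitrary unions of such finite intersections. For $\mathbf{E}\subseteq\mathcal{E}$, an element $D\in\tau_{\mathbf{E}}$ is called dense in $\bigcup\mathbf{E}$ w.r.t. $\tau_{\mathbf{E}}$ if $D\cap T\neq\emptyset$ for every nonempty $T\in\tau_{\mathbf{E}}$. A set of evidence allocation functions on $(S,\mathcal{E})$ is a set $\mathfrak{F}$ of functions $2^{\mathcal{E}}\to\tau_{\mathcal{E}}$ such that for all $f,g\in\mathfrak{F}$: (1) $f(\emptyset)=S$;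 (2) for every nonempty $\mathbf{E}\subseteq\mathcal{E}$, either $f(\mathbf{E})=\emptyset$, or $f(\mathbf{E})\in\tau_{\mathbf{E}}$ and $f(\mathbf{E})$ is dense in $\bigcup\mathbf{E}$ w.r.t. $\tau_{\mathbf{E}}$; (3) for every $\mathbf{E}\subseteq\mathcal{E}$, $f(\mathbf{E})\subseteq g(\mathbf{E})$ or $g(\mathbf{E})\subseteq f(\mathbf{E})$. *)

theory Defs
  imports Main
begin

definition qe_frame :: "'a set \<Rightarrow> 'a set set \<Rightarrow> bool" where
  "qe_frame S \<E> \<longleftrightarrow> finite S \<and> S \<noteq> {} \<and> \<E> \<subseteq> Pow S \<and> \<E> \<noteq> {} \<and> {} \<notin> \<E> \<and> S \<notin> \<E>"

definition fin_inters :: "'a set set \<Rightarrow> 'a set set" where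
  "fin_inters E = {\<Inter>F | F. finite F \<and> F \<noteq> {} \<and> F \<subseteq> E}"

definition gen_top :: "'a set \<Rightarrow> 'a set set \<Rightarrow> 'a set set" where
  "gen_top S E = {{}, S} \<union> {\<Union>B | B. B \<subseteq> fin_inters E}"

definition dense_wrt :: "'a set \<Rightarrow> 'a set set \<Rightarrow> 'a set \<Rightarrow> bool" where
  "dense_wrt S E D \<longleftrightarrow> (\<forall>T \<in> gen_top S E. T \<noteq> {} \<longrightarrow> D \<inter> T \<noteq> {})"

text \<open>A set of evidence allocation functions on (S, \<E>); functions are
  represented on all of 'a set set but only their values on subsets of \<E> matter.\<close>
definition eaf_set :: "'a set \<Rightarrow> 'a set set \<Rightarrow> ('a set set \<Rightarrow> 'a set) set \<Rightarrow> bool" where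
  "eaf_set S \<E> \<F> \<longleftrightarrow>
     (\<forall>f \<in> \<F>. (\<forall>E. E \<subseteq> \<E> \<longrightarrow> f E \<in> gen_top S \<E>)) \<and>
     (\<forall>f \<in> \<F>. f {} = S) \<and>
     (\<forall>f \<in> \<F>. \<forall>E. E \<subseteq> \<E> \<and> E \<noteq> {} \<longrightarrow>
        f E = {} \<or> (f E \<in> gen_top S E \<and> dense_wrt S E (f E))) \<and>
     (\<forall>f \<in> \<F>. \<forall>g \<in> \<F>. \<forall>E. E \<subseteq> \<E> \<longrightarrow> f E \<subseteq> g E \<or> g E \<subseteq> f E)"

definition least_dense :: "'a set \<Rightarrow> 'a set set \<Rightarrow> 'a set \<Rightarrow> bool" where
  "least_dense S E D \<longleftrightarrow> D \<in> gen_top S E \<and> dense_wrt S E D \<and>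
     (\<forall>D'. D' \<in> gen_top S E \<and> dense_wrt S E D' \<longrightarrow> D \<subseteq> D')"

definition i_alloc :: "'a set \<Rightarrow> 'a set set \<Rightarrow> 'a set" where
  "i_alloc S E = (if E = {} then S else \<Inter>E)"

definition u_alloc :: "'a set \<Rightarrow> 'a set set \<Rightarrow> 'a set" where
  "u_alloc S E = (if E = {} then S else \<Union>E)"

definition d_alloc :: "'a set \<Rightarrow> 'a set set \<Rightarrow> 'a set" where
  "d_alloc S E = (if E = {} then S else (THE D. least_dense S E D))"

end

theory Submission
  imports Defs
begin

definition minset :: "'a set set \<Rightarrow> 'a set \<Rightarrow> bool" where
  "minset E M \<longleftrightarrow> M \<in> fin_inters E \<and> M \<noteq> {} \<and>
     (\<forall>M' \<in> fin_inters E. M' \<noteq> {} \<longrightarrow> M' \<subseteq> M \<longrightarrow> M' = M)"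

lemma fin_inters_sub:
  assumes "E \<subseteq> Pow S" "M \<in> fin_inters E" shows "M \<subseteq> S"
  using assms unfolding fin_inters_def by blast

lemma fin_inters_Int:
  assumes "A \<in> fin_inters E" "B \<in> fin_inters E" shows "A \<inter> B \<in> fin_inters E"
proof -
  obtain F1 where F1: "A = \<Inter>F1" "finite F1" "F1 \<noteq> {}" "F1 \<subseteq> E" using assms(1) unfolding fin_inters_def by blast
  obtain F2 where F2: "B = \<Inter>F2" "finite F2" "F2 \<noteq> {}" "F2 \<subseteq> E" using assms(2) unfolding fin_inters_def by blast
  have "A \<inter> B = \<Inter>(F1 \<union> F2)" using F1 F2 by auto
  moreover have "finite (F1 \<union> F2)" "F1 \<union> F2 \<noteq> {}" "F1 \<union> F2 \<subseteq> E" using F1 F2 by auto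
  ultimately show ?thesis unfolding fin_inters_def by (intro CollectI exI[of _ "F1 \<union> F2"]) simp
qed

lemma fin_inters_Union: "M \<in> fin_inters E \<Longrightarrow> M \<subseteq> \<Union>E"
proof -
  assume "M \<in> fin_inters E"
  then obtain F where "M = \<Inter>F" "F \<noteq> {}" "F \<subseteq> E" unfolding fin_inters_def by blast
  thus ?thesis by blast
qed

lemma fin_inters_Inter: "M \<in> fin_inters E \<Longrightarrow> \<Inter>E \<subseteq> M"
proof -
  assume "M \<in> fin_inters E"
  then obtain F where "M = \<Inter>F" "F \<noteq> {}" "F \<subseteq> E" unfolding fin_inters_def by blast
  thus ?thesis by blast
qed

lemma fin_inters_mem: "e \<in> E \<Longrightarrow> e \<in> fin_inters E"
  unfolding fin_inters_def by (intro CollectI exI[of _ "{e}"]) simp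

lemma exists_minset:
  assumes "finite S" "E \<subseteq> Pow S" "N \<in> fin_inters E" "N \<noteq> {}"
  shows "\<exists>M. minset E M \<and> M \<subseteq> N"
proof -
  let ?A = "{M \<in> fin_inters E. M \<noteq> {} \<and> M \<subseteq> N}"
  have "?A \<subseteq> Pow S" using fin_inters_sub[OF assms(2)] by blast
  hence fin: "finite ?A" using assms(1) by (meson finite_Pow_iff finite_subset)
  have "N \<in> ?A" using assms by blast
  from finite_has_minimal2[OF fin this] obtain M where
    M: "M \<in> ?A" "\<forall>b\<in>?A. b \<subseteq> M \<longrightarrow> M = b" by blast
  have "minset E M" unfolding minset_def using M by blast
  thus ?thesis using M by blast
qed

lemma gen_top_cases:
  assumes "T \<in> gen_top S E" "T \<noteq> {}" "T \<noteq> S"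
  obtains B where "T = \<Union>B" "B \<subseteq> fin_inters E"
  using assms unfolding gen_top_def by blast

lemma fin_inters_open: "M \<in> fin_inters E \<Longrightarrow> M \<in> gen_top S E"
  unfolding gen_top_def by (intro UnI2 CollectI exI[of _ "{M}"]) simp

lemma S_open: "S \<in> gen_top S E"
  unfolding gen_top_def by simp

lemma denseD: "dense_wrt S E D \<Longrightarrow> T \<in> gen_top S E \<Longrightarrow> T \<noteq> {} \<Longrightarrow> D \<inter> T \<noteq> {}"
  unfolding dense_wrt_def by blast

lemma minset_sub_dense:
  assumes "E \<subseteq> Pow S" "minset E M" "D \<in> gen_top S E" "dense_wrt S E D" "S \<noteq> {}"
  shows "M \<subseteq> D"
proof -
  have Mf: "M \<in> fin_inters E" "M \<noteq> {}" and Mmin: "\<And>M'. M' \<in> fin_inters E \<Longrightarrow> M' \<noteq> {} \<Longrightarrow> M' \<subseteq> M \<Longrightarrow> M' = M"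
    using assms(2) unfolding minset_def by auto
  have MS: "M \<subseteq> S" using fin_inters_sub[OF assms(1) Mf(1)] .
  have "D \<inter> S \<noteq> {}" using denseD[OF assms(4) S_open assms(5)] .
  hence "D \<noteq> {}" by blast
  show ?thesis
  proof (cases "D = S")
    case True thus ?thesis using MS by simp
  next
    case False
    then obtain B where B: "D = \<Union>B" "B \<subseteq> fin_inters E"
      using gen_top_cases[OF assms(3) \<open>D \<noteq> {}\<close>] by metis
    have "D \<inter> M \<noteq> {}" using denseD[OF assms(4) fin_inters_open[OF Mf(1)] Mf(2)] .
    then obtain b where b: "b \<in> B" "b \<inter> M \<noteq> {}" using B by blast
    have "b \<in> fin_inters E" using b B by blast
    hence "b \<inter> M \<in> fin_inters E" using fin_inters_Int Mf(1) by blast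
    hence "b \<inter> M = M" using Mmin b by blast
    thus ?thesis using b B by blast
  qed
qed

lemma minsetD: "minset E M \<Longrightarrow> M \<in> fin_inters E \<and> M \<noteq> {}"
  unfolding minset_def by (elim conjE) (intro conjI)

lemma least_dense_ex:
  assumes "finite S" "S \<noteq> {}" "E \<subseteq> Pow S" "E \<noteq> {}" "{} \<notin> E"
  shows "least_dense S E (\<Union>{M. minset E M})"
proof -
  let ?D = "\<Union>{M. minset E M}"
  have "{M. minset E M} \<subseteq> fin_inters E" using minsetD by blast
  hence op: "?D \<in> gen_top S E" unfolding gen_top_def by (intro UnI2 CollectI exI[of _ "{M. minset E M}"]) simp
  have contain: "\<exists>M. minset E M \<and> M \<subseteq> T" if T: "T \<in> gen_top S E" "T \<noteq> {}" for T
  proof (cases "T = S")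
    case True
    obtain e where "e \<in> E" using assms(4) by blast
    hence "e \<in> fin_inters E" "e \<noteq> {}" "e \<subseteq> S" using fin_inters_mem assms(3,5) by blast+
    thus ?thesis using exists_minset[OF assms(1,3)] True by blast
  next
    case False
    then obtain B where B: "T = \<Union>B" "B \<subseteq> fin_inters E" using gen_top_cases[OF T False] by metis
    then obtain N where "N \<in> B" "N \<noteq> {}" using T by blast
    hence "N \<in> fin_inters E" using B by blast
    then obtain M where "minset E M" "M \<subseteq> N" using exists_minset[OF assms(1,3)] \<open>N \<noteq> {}\<close> by blast
    thus ?thesis using B \<open>N \<in> B\<close> by blast
  qed
  have dn: "dense_wrt S E ?D" unfolding dense_wrt_def
  proof (intro ballI impI)
    fix T assume "T \<in> gen_top S E" "T \<noteq> {}"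
    then obtain M where "minset E M" "M \<subseteq> T" using contain by blast
    moreover hence "M \<noteq> {}" using minsetD by blast
    ultimately show "?D \<inter> T \<noteq> {}" by blast
  qed
  have "?D \<subseteq> D'" if "D' \<in> gen_top S E" "dense_wrt S E D'" for D'
    using minset_sub_dense[OF assms(3) _ that assms(2)] by blast
  thus ?thesis unfolding least_dense_def using op dn by simp
qed

lemma least_dense_unique:
  "least_dense S E D \<Longrightarrow> least_dense S E D' \<Longrightarrow> D = D'"
  unfolding least_dense_def by blast

lemma union_open: "B \<subseteq> fin_inters E \<Longrightarrow> \<Union>B \<in> gen_top S E"
  unfolding gen_top_def by (intro UnI2 CollectI exI[of _ B]) simp

lemma fin_inters_mono: "E \<subseteq> E' \<Longrightarrow> fin_inters E \<subseteq> fin_inters E'"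
  unfolding fin_inters_def by (intro subsetI, elim CollectE exE conjE) (intro CollectI exI conjI, assumption+, blast)

lemma gen_top_mono: "E \<subseteq> E' \<Longrightarrow> T \<in> gen_top S E \<Longrightarrow> T \<in> gen_top S E'"
proof -
  assume a: "E \<subseteq> E'" "T \<in> gen_top S E"
  show ?thesis
  proof (cases "T = {} \<or> T = S")
    case True thus ?thesis unfolding gen_top_def by auto
  next
    case False
    then obtain B where "T = \<Union>B" "B \<subseteq> fin_inters E" using gen_top_cases[OF a(2)] by metis
    thus ?thesis using union_open fin_inters_mono[OF a(1)] by (metis subset_trans)
  qed
qed

theorem corollary2:
  fixes S :: "'a set" and \<E> :: "'a set set"
  assumes "qe_frame S \<E>"
  shows "(\<forall>E. E \<subseteq> \<E> \<and> E \<noteq> {} \<longrightarrow> (\<exists>D. least_dense S E D))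
         \<and> eaf_set S \<E> {i_alloc S, u_alloc S, d_alloc S}"
proof -
  have fS: "finite S" and nS: "S \<noteq> {}" and EP: "\<E> \<subseteq> Pow S" and Ene: "\<E> \<noteq> {}"
    and e0: "{} \<notin> \<E>" and SE: "S \<notin> \<E>"
    using assms unfolding qe_frame_def by auto
  have LD: "least_dense S E (d_alloc S E)" if "E \<subseteq> \<E>" "E \<noteq> {}" for E
  proof -
    have EP': "E \<subseteq> Pow S" using that(1) EP by (rule subset_trans)
    have e0': "{} \<notin> E" using that(1) e0 by (rule contra_subsetD)
    have X: "least_dense S E (\<Union>{M. minset E M})"
      by (rule least_dense_ex[OF fS nS EP' that(2) e0'])
    have "(THE D. least_dense S E D) = \<Union>{M. minset E M}"
      by (rule the_equality[of "least_dense S E", OF X]) (rule least_dense_unique[OF _ X])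
    thus ?thesis using X that(2) unfolding d_alloc_def by simp
  qed
  have Sop: "S \<in> gen_top S E" for E by (rule S_open)
  have finE: "finite E" if "E \<subseteq> \<E>" for E
    using that EP fS by (meson finite_Pow_iff finite_subset)
  have iop: "\<Inter>E \<in> gen_top S E" if "E \<subseteq> \<E>" "E \<noteq> {}" for E
  proof -
    have "\<Inter>E \<in> fin_inters E" unfolding fin_inters_def using that finE by blast
    thus ?thesis by (rule fin_inters_open)
  qed
  have uop: "\<Union>E \<in> gen_top S E" for E
    using union_open[of E E S] fin_inters_mem by blast
  have idense: "dense_wrt S E (\<Inter>E)" if "E \<subseteq> \<E>" "E \<noteq> {}" "\<Inter>E \<noteq> {}" for E
    unfolding dense_wrt_def
  proof (intro ballI impI)
    fix T assume T: "T \<in> gen_top S E" "T \<noteq> {}"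
    have "\<Inter>E \<subseteq> S" using that EP by blast
    show "\<Inter>E \<inter> T \<noteq> {}"
    proof (cases "T = S")
      case True thus ?thesis using \<open>\<Inter>E \<subseteq> S\<close> that(3) by blast
    next
      case False
      then obtain B where B: "T = \<Union>B" "B \<subseteq> fin_inters E" using gen_top_cases[OF T False] by metis
      then obtain N where N: "N \<in> B" "N \<noteq> {}" using T by blast
      have "\<Inter>E \<subseteq> N" using fin_inters_Inter N B by blast
      thus ?thesis using N B that(3) by blast
    qed
  qed
  have udense: "dense_wrt S E (\<Union>E)" if EE: "E \<subseteq> \<E>" "E \<noteq> {}" for E
    unfolding dense_wrt_def
  proof (intro ballI impI)
    fix T assume T: "T \<in> gen_top S E" "T \<noteq> {}"
    have "\<Union>E \<subseteq> S" using that EP by blast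
    obtain e where e: "e \<in> E" using EE(2) by blast
    hence "e \<noteq> {}" using EE(1) e0 by blast
    hence "\<Union>E \<noteq> {}" using e by blast
    show "\<Union>E \<inter> T \<noteq> {}"
    proof (cases "T = S")
      case True thus ?thesis using \<open>\<Union>E \<subseteq> S\<close> \<open>\<Union>E \<noteq> {}\<close> by blast
    next
      case False
      then obtain B where B: "T = \<Union>B" "B \<subseteq> fin_inters E" using gen_top_cases[OF T False] by metis
      have "T \<subseteq> \<Union>E" using B fin_inters_Union by blast
      thus ?thesis using T by blast
    qed
  qed
  have c1: "\<forall>f \<in> {i_alloc S, u_alloc S, d_alloc S}. \<forall>E. E \<subseteq> \<E> \<longrightarrow> f E \<in> gen_top S \<E>"
  proof (intro ballI allI impI)
    fix f E assume f: "f \<in> {i_alloc S, u_alloc S, d_alloc S}" and E: "E \<subseteq> \<E>"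
    show "f E \<in> gen_top S \<E>"
    proof (cases "E = {}")
      case True thus ?thesis using f Sop unfolding i_alloc_def u_alloc_def d_alloc_def by auto
    next
      case False
      have a: "i_alloc S E = \<Inter>E" "u_alloc S E = \<Union>E" using False unfolding i_alloc_def u_alloc_def by simp_all
      have "f E \<in> gen_top S E"
        using f iop[OF E False] uop[of E] LD[OF E False] unfolding least_dense_def a[symmetric] by blast
      thus ?thesis using gen_top_mono[OF E] by simp
    qed
  qed
  have c2: "\<forall>f \<in> {i_alloc S, u_alloc S, d_alloc S}. f {} = S"
    unfolding i_alloc_def u_alloc_def d_alloc_def by auto
  have c3: "\<forall>f \<in> {i_alloc S, u_alloc S, d_alloc S}. \<forall>E. E \<subseteq> \<E> \<and> E \<noteq> {} \<longrightarrow>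
        f E = {} \<or> (f E \<in> gen_top S E \<and> dense_wrt S E (f E))"
  proof (intro ballI allI impI)
    fix f E assume f: "f \<in> {i_alloc S, u_alloc S, d_alloc S}" and E: "E \<subseteq> \<E> \<and> E \<noteq> {}"
    have a: "i_alloc S E = \<Inter>E" "u_alloc S E = \<Union>E" using E unfolding i_alloc_def u_alloc_def by simp_all
    have "i_alloc S E = {} \<or> (i_alloc S E \<in> gen_top S E \<and> dense_wrt S E (i_alloc S E))"
      unfolding a using iop[of E] idense[of E] E by blast
    moreover have "u_alloc S E \<in> gen_top S E \<and> dense_wrt S E (u_alloc S E)"
      unfolding a using uop[of E] udense[of E] E by blast
    moreover have "d_alloc S E \<in> gen_top S E \<and> dense_wrt S E (d_alloc S E)"
      using LD[of E] E unfolding least_dense_def by blast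
    ultimately show "f E = {} \<or> (f E \<in> gen_top S E \<and> dense_wrt S E (f E))"
      using f by blast
  qed
  have c4: "\<forall>f \<in> {i_alloc S, u_alloc S, d_alloc S}. \<forall>g \<in> {i_alloc S, u_alloc S, d_alloc S}.
      \<forall>E. E \<subseteq> \<E> \<longrightarrow> f E \<subseteq> g E \<or> g E \<subseteq> f E"
  proof (intro ballI allI impI)
    fix f g E assume f: "f \<in> {i_alloc S, u_alloc S, d_alloc S}" and g: "g \<in> {i_alloc S, u_alloc S, d_alloc S}"
      and E: "E \<subseteq> \<E>"
    show "f E \<subseteq> g E \<or> g E \<subseteq> f E"
    proof (cases "E = {}")
      case True thus ?thesis using f g unfolding i_alloc_def u_alloc_def d_alloc_def by auto
    next
      case False
      have iu: "i_alloc S E \<subseteq> u_alloc S E" using False unfolding i_alloc_def u_alloc_def by auto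
      have du: "d_alloc S E \<subseteq> u_alloc S E" using LD[OF E False] uop[of E] udense[OF E False] False
        unfolding least_dense_def u_alloc_def by auto
      have di: "d_alloc S E \<subseteq> i_alloc S E \<or> i_alloc S E \<subseteq> d_alloc S E"
      proof (cases "\<Inter>E = {}")
        case True thus ?thesis using False unfolding i_alloc_def by auto
      next
        case nt: False
        show ?thesis using LD[OF E False] iop[OF E False] idense[OF E False nt] False
          unfolding least_dense_def i_alloc_def by auto
      qed
      show ?thesis using f g iu du di by auto
    qed
  qed
  show ?thesis using LD c1 c2 c3 c4 unfolding eaf_set_def by blast
qed

end
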